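(* Let $q,d\geq 2$ be integers and let $\psi\in\mathbb{Z}$, $\psi\neq 0$. Then for every $\theta,x\in\mathbb{Z}$, the natural density of the set $\{n\in\mathbb{N}: \psi w_q(n)+\theta n+x\equiv 0\pmod d\}$ exists and equals $$\begin{cases}\frac{1}{d}\gcd(\psi,\theta,d) & \text{if } \gcd(\psi,\theta,d)\mid\gcd(x,d),\\ 0 & \text{otherwise.}\end{cases}$$
   Context: For an integer $q\geq 2$ and $n\in\mathbb{N}$: $v_q(0)=0$ and, for $n>0$, $v_q(n)=\max\{k: q^k\mid n\}$; $w_q(n)=\sum_{i=0}^n v_q(i)$. The natural density of $T\subseteq\mathbb{N}$ is $\lim_{N\to\infty}|\{n\in T: 0\leq n<N\}|/N$. *)

theory Defs
  imports "HOL-Analysis.Analysis" "HOL-Number_Theory.Cong"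
begin

definition vq :: "nat \<Rightarrow> nat \<Rightarrow> nat" where
  "vq q n = (if n = 0 then 0 else (GREATEST k. q ^ k dvd n))"

definition wq :: "nat \<Rightarrow> nat \<Rightarrow> nat" where
  "wq q n = (\<Sum>i = 0..n. vq q i)"

definition has_natural_density :: "nat set \<Rightarrow> real \<Rightarrow> bool" where
  "has_natural_density T \<delta> \<longleftrightarrow>
     ((\<lambda>N. real (card {n \<in> T. n < N}) / real N) \<longlonglongrightarrow> \<delta>)"

end

theory Submission
  imports Defs
begin


lemma vq_eqI:
  assumes q: "q \<ge> 2" and n: "n > 0" and k1: "q^k dvd n" and k2: "\<not> q^(Suc k) dvd n"
  shows "vq q n = k"
proof -
  have "(GREATEST k. q ^ k dvd n) = k"
  proof (rule Greatest_equality)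
    show "q^k dvd n" by fact
    fix y assume "q^y dvd n"
    show "y \<le> k"
    proof (rule ccontr)
      assume "\<not> y \<le> k"
      then have "q^(Suc k) dvd q^y" by (intro le_imp_power_dvd) simp
      with \<open>q^y dvd n\<close> k2 show False using dvd_trans by blast
    qed
  qed
  thus ?thesis using n by (simp add: vq_def)
qed

lemma vq_props:
  assumes q: "q \<ge> 2" and n: "n > 0"
  shows "q^(vq q n) dvd n \<and> \<not> q^(Suc (vq q n)) dvd n"
proof -
  have bnd: "\<forall>y. q^y dvd n \<longrightarrow> y \<le> n"
  proof (intro allI impI)
    fix y assume "q^y dvd n"
    then have "q^y \<le> n" using n by (simp add: dvd_imp_le)
    moreover have "y < 2^y" by (rule less_exp)
    moreover have "2^y \<le> q^y" using q by (simp add: power_mono)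
    ultimately show "y \<le> n" by linarith
  qed
  have P: "q^(GREATEST k. q ^ k dvd n) dvd n"
    by (rule GreatestI_nat[where k=0]) (use bnd in auto)
  have "\<not> q^(Suc (GREATEST k. q ^ k dvd n)) dvd n"
  proof
    assume "q^(Suc (GREATEST k. q ^ k dvd n)) dvd n"
    then have "Suc (GREATEST k. q ^ k dvd n) \<le> (GREATEST k. q ^ k dvd n)"
      by (rule Greatest_le_nat) (use bnd in auto)
    thus False by simp
  qed
  with P show ?thesis using n by (simp add: vq_def)
qed

lemma vq_shift:
  assumes q: "q \<ge> 2" and i: "0 < i" "i < q^m"
  shows "vq q (q^m * a + i) = vq q i"
proof -
  define k where "k = vq q i"
  have k1: "q^k dvd i" and k2: "\<not> q^(Suc k) dvd i" using vq_props[OF q i(1)] k_def by auto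
  have "q^k \<le> i" using k1 i(1) by (simp add: dvd_imp_le)
  then have "q^k < q^m" using i(2) by simp
  then have km: "k < m" using q by (simp add: power_strict_increasing_iff)
  have "q^(Suc k) dvd q^m * a" using km by (intro dvd_mult2 le_imp_power_dvd) simp
  moreover have "q^k dvd q^m * a" using km by (intro dvd_mult2 le_imp_power_dvd) simp
  ultimately show ?thesis unfolding k_def[symmetric] using k1 k2 i(1) q
    by (intro vq_eqI) (auto simp: dvd_add_right_iff)
qed

lemma vq_pow_mult:
  assumes q: "q \<ge> 2" and b: "0 < b" "b < q"
  shows "vq q (q^m * b) = m"
proof (rule vq_eqI[OF q])
  show "0 < q^m * b" using q b by simp
  show "q^m dvd q^m * b" by simp
  show "\<not> q^(Suc m) dvd q^m * b"
  proof
    assume "q^(Suc m) dvd q^m * b"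
    then have "q^m * q dvd q^m * b" by (simp add: mult.commute)
    then have "q dvd b" using q by (simp)
    then show False using b by (simp add: dvd_imp_le leD)
  qed
qed

lemma vq_pow:
  assumes q: "q \<ge> 2" shows "vq q (q^m) = m"
  using vq_pow_mult[OF q, of 1 m] q by simp

lemma wq_0[simp]: "wq q 0 = 0" by (simp add: wq_def vq_def)

lemma wq_Suc: "wq q (Suc n) = wq q n + vq q (Suc n)"
  by (simp add: wq_def)

lemma wq_block:
  assumes q: "q \<ge> 2" and r: "r < q^m"
  shows "wq q (q^m * a + r) = wq q (q^m * a) + wq q r"
  using r
proof (induction r)
  case 0 then show ?case by simp
next
  case (Suc r)
  have "wq q (q^m * a + Suc r) = wq q (q^m * a + r) + vq q (q^m * a + Suc r)"
    by (simp add: wq_Suc)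
  also have "vq q (q^m * a + Suc r) = vq q (Suc r)"
    using vq_shift[OF q, of "Suc r" m a] Suc.prems by simp
  finally show ?case using Suc by (simp add: wq_Suc)
qed

lemma wq_step:
  assumes q: "q \<ge> 2" and b: "b \<ge> 1"
  shows "wq q (q^m * b) + m = wq q (q^m * (b - 1)) + wq q (q^m) + vq q (q^m * b)"
proof -
  have pos: "q^m \<ge> 1" using q by simp
  have e1: "q^m * b = Suc (q^m * (b - 1) + (q^m - 1))"
    using pos b by (cases b) (auto simp: algebra_simps)
  have e2: "q^m = Suc (q^m - 1)" using pos by simp
  have "wq q (q^m * b) = wq q (q^m * (b - 1)) + wq q (q^m - 1) + vq q (q^m * b)"
  proof -
    have "wq q (q^m * b) = wq q (q^m * (b - 1) + (q^m - 1)) + vq q (q^m * b)"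
      by (subst e1, subst wq_Suc, subst e1[symmetric]) simp
    also have "wq q (q^m * (b - 1) + (q^m - 1)) = wq q (q^m * (b - 1)) + wq q (q^m - 1)"
      using wq_block[OF q, of "q^m - 1" m "b - 1"] pos by simp
    finally show ?thesis .
  qed
  moreover have "wq q (q^m) = wq q (q^m - 1) + m"
    using wq_Suc[of q "q^m - 1"] e2 vq_pow[OF q, of m] by simp
  ultimately show ?thesis by simp
qed

lemma wq_mult:
  assumes q: "q \<ge> 2" and a: "a < q"
  shows "wq q (q^m * a) = a * wq q (q^m)"
  using a
proof (induction a)
  case 0 then show ?case by simp
next
  case (Suc a)
  have "wq q (q^m * Suc a) + m = wq q (q^m * a) + wq q (q^m) + vq q (q^m * Suc a)"
    using wq_step[OF q, of "Suc a" m] by simp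
  also have "vq q (q^m * Suc a) = m" using vq_pow_mult[OF q, of "Suc a" m] Suc.prems by simp
  finally show ?case using Suc by simp
qed

lemma wq_pow_Suc:
  assumes q: "q \<ge> 2"
  shows "wq q (q^(Suc m)) = q * wq q (q^m) + 1"
proof -
  have "wq q (q^m * q) + m = wq q (q^m * (q - 1)) + wq q (q^m) + vq q (q^m * q)"
    using wq_step[OF q, of q m] q by simp
  also have "vq q (q^m * q) = Suc m" using vq_pow[OF q, of "Suc m"] by (simp add: mult.commute)
  also have "wq q (q^m * (q - 1)) = (q - 1) * wq q (q^m)" using wq_mult[OF q, of "q - 1" m] q by simp
  finally have "wq q (q^m * q) = q * wq q (q^m) + 1" using q
    by (simp add: algebra_simps)
  thus ?thesis by (simp add: mult.commute)
qed



definition hh :: "nat \<Rightarrow> int \<Rightarrow> int \<Rightarrow> nat \<Rightarrow> int" where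
  "hh q \<psi> \<theta> n = \<psi> * int (wq q n) + \<theta> * int n"

lemma hh_block:
  assumes q: "q \<ge> 2" and r: "r < q^m"
  shows "hh q \<psi> \<theta> (q^m * a + r) = hh q \<psi> \<theta> (q^m * a) + hh q \<psi> \<theta> r"
  using wq_block[OF q r, of a] by (simp add: hh_def algebra_simps)

lemma hh_mult:
  assumes q: "q \<ge> 2" and a: "a < q"
  shows "hh q \<psi> \<theta> (q^m * a) = int a * hh q \<psi> \<theta> (q^m)"
  using wq_mult[OF q a, of m] by (simp add: hh_def algebra_simps)

lemma hh_rec:
  assumes q: "q \<ge> 2"
  shows "hh q \<psi> \<theta> (q^Suc m) = int q * hh q \<psi> \<theta> (q^m) + \<psi>"
  using wq_pow_Suc[OF q, of m] by (simp add: hh_def algebra_simps)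

definition EE :: "nat \<Rightarrow> int \<Rightarrow> complex" where
  "EE d j = exp (2 * of_real pi * \<i> * of_int j / of_nat d)"

lemma EE_add: "EE d (a + b) = EE d a * EE d b"
  unfolding EE_def by (simp add: exp_add[symmetric] add_divide_distrib algebra_simps)

lemma EE_mult_nat: "EE d (int n * j) = EE d j ^ n"
  unfolding EE_def by (simp add: exp_of_nat_mult[symmetric] algebra_simps)

lemma EE_0[simp]: "EE d 0 = 1" unfolding EE_def by simp

lemma norm_EE[simp]: "norm (EE d j) = 1"
  unfolding EE_def by (simp add: norm_exp_eq_Re)

lemma EE_eq_1:
  assumes d: "d > 0"
  shows "EE d j = 1 \<longleftrightarrow> int d dvd j"
proof -
  have "EE d j = 1 \<longleftrightarrow> (\<exists>n::int. 2 * pi * j / d = real_of_int (2 * n) * pi)"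
    unfolding EE_def exp_eq_1 by (simp add: Im_divide_Reals)
  also have "\<dots> \<longleftrightarrow> (\<exists>n::int. real_of_int j = real_of_int (n * int d))"
    using d by (auto simp: field_simps)
  also have "\<dots> \<longleftrightarrow> int d dvd j"
  proof
    assume "\<exists>n::int. real_of_int j = real_of_int (n * int d)"
    then obtain n where "real_of_int j = real_of_int (n * int d)" by blast
    then have "j = n * int d" by (simp only: of_int_eq_iff)
    thus "int d dvd j" by simp
  next
    assume "int d dvd j"
    then obtain n where "j = int d * n" by (auto simp: dvd_def)
    thus "\<exists>n::int. real_of_int j = real_of_int (n * int d)" by (metis mult.commute)
  qed
  finally show ?thesis .
qed

lemma EE_dvd: "d > 0 \<Longrightarrow> int d dvd j \<Longrightarrow> EE d j = 1"
  using EE_eq_1 by blast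

lemma EE_mod:
  assumes d: "d > 0"
  shows "EE d j = EE d (j mod int d)"
proof -
  have "j = j mod int d + int d * (j div int d)" by simp
  then have "EE d j = EE d (j mod int d) * EE d (int d * (j div int d))"
    by (metis EE_add)
  thus ?thesis using EE_dvd[OF d] by simp
qed

lemma orth:
  assumes d: "d > 0"
  shows "(\<Sum>t<d. EE d (int t * y)) = (if int d dvd y then of_nat d else 0)"
proof -
  have "(\<Sum>t<d. EE d (int t * y)) = (\<Sum>t<d. EE d y ^ t)" by (simp add: EE_mult_nat)
  also have "\<dots> = (if int d dvd y then of_nat d else 0)"
  proof (cases "int d dvd y")
    case True then show ?thesis using EE_dvd[OF d] by simp
  next
    case False
    then have "EE d y \<noteq> 1" using EE_eq_1[OF d] by simp
    moreover have "EE d y ^ d = 1" using EE_mult_nat[of d d y] EE_dvd[OF d] by (metis dvd_triv_left)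
    ultimately show ?thesis using False by (simp add: geometric_sum)
  qed
  finally show ?thesis .
qed

lemma sum_blocks:
  fixes L A :: nat
  shows "(\<Sum>n<L*A. f n) = (\<Sum>a<A. \<Sum>r<L. f (L*a + r))"
proof (induction A)
  case 0 then show ?case by simp
next
  case (Suc A)
  have "(\<Sum>n<L*Suc A. f n) = (\<Sum>n<L*A. f n) + (\<Sum>r<L. f (L*A + r))"
  proof -
    have "{..<L*Suc A} = {..<L*A} \<union> {L*A..<L*A+L}" by auto
    then have "(\<Sum>n<L*Suc A. f n) = (\<Sum>n<L*A. f n) + (\<Sum>n\<in>{L*A..<L*A+L}. f n)"
      by (simp add: sum.union_disjoint ivl_disj_int)
    also have "(\<Sum>n\<in>{L*A..<L*A+L}. f n) = (\<Sum>r<L. f (L*A + r))"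
      using sum.shift_bounds_nat_ivl[of f 0 "L*A" L] by (simp add: atLeast0LessThan add.commute)
    finally show ?thesis .
  qed
  then show ?case using Suc by simp
qed



lemma bounded_over_n:
  fixes f :: "nat \<Rightarrow> complex"
  assumes "\<And>N. norm (f N) \<le> C"
  shows "(\<lambda>N. f N / of_nat N) \<longlonglongrightarrow> 0"
proof (rule tendsto_norm_zero_cancel)
  have l: "(\<lambda>N. C / real N) \<longlonglongrightarrow> 0" by (rule lim_const_over_n)
  have e: "\<forall>\<^sub>F N in sequentially. norm (norm (f N / of_nat N)) \<le> C / real N"
    using assms by (auto simp: norm_divide divide_right_mono)
  show "(\<lambda>N. norm (f N / of_nat N)) \<longlonglongrightarrow> 0"
    by (rule Lim_null_comparison[OF e l])
qed

definition BB :: "nat \<Rightarrow> real" where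
  "BB d = Max ((\<lambda>j. norm (1 + EE d j)) ` {1..<int d})"

lemma BB_lt2:
  assumes d: "d \<ge> 2" shows "BB d < 2"
  unfolding BB_def
proof (subst Max_less_iff)
  show "finite ((\<lambda>j. norm (1 + EE d j)) ` {1..<int d})" by simp
  show "(\<lambda>j. norm (1 + EE d j)) ` {1..<int d} \<noteq> {}" using d by auto
  show "\<forall>a\<in>(\<lambda>j. norm (1 + EE d j)) ` {1..<int d}. a < 2"
  proof
    fix a assume "a \<in> (\<lambda>j. norm (1 + EE d j)) ` {1..<int d}"
    then obtain j where j: "j \<in> {1..<int d}" and a: "a = norm (1 + EE d j)" by auto
    have "\<not> int d dvd j" using j by (auto dest: zdvd_imp_le)
    then have ne: "EE d j \<noteq> 1" using EE_eq_1[of d j] d by simp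
    have le: "norm (1 + EE d j) \<le> 2" using norm_triangle_ineq[of 1 "EE d j"] by simp
    have "norm (1 + EE d j) \<noteq> 2"
    proof
      assume "norm (1 + EE d j) = 2"
      then have "norm (1::complex) + norm (EE d j) = norm (1 + EE d j)" by simp
      then have "norm (1::complex) *\<^sub>R EE d j = norm (EE d j) *\<^sub>R 1"
        using norm_triangle_eq by metis
      then show False using ne by simp
    qed
    with le a show "a < 2" by simp
  qed
qed

lemma BB_bound:
  assumes d: "d \<ge> 2" and nd: "\<not> int d dvd j"
  shows "norm (1 + EE d j) \<le> BB d"
proof -
  have "EE d j = EE d (j mod int d)" using EE_mod[of d j] d by simp
  moreover have "j mod int d \<in> {1..<int d}"
  proof -
    have "0 \<le> j mod int d" "j mod int d < int d" using d by simp_all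
    moreover have "j mod int d \<noteq> 0" using nd by (simp add: dvd_eq_mod_eq_0)
    ultimately show ?thesis by simp
  qed
  ultimately show ?thesis unfolding BB_def by (auto intro: Max_ge)
qed

lemma BB_nonneg: assumes d: "d \<ge> 2" shows "0 \<le> BB d"
proof -
  have "\<not> int d dvd 1" using d by simp
  then have "norm (1 + EE d 1) \<le> BB d" using BB_bound[OF d] by blast
  thus ?thesis using norm_ge_zero[of "1 + EE d 1"] by linarith
qed

lemma geo_le:
  fixes z :: complex assumes "norm z = 1"
  shows "norm (\<Sum>a<q. z ^ a) \<le> real q"
proof -
  have "norm (\<Sum>a<q. z ^ a) \<le> (\<Sum>a<q. norm (z ^ a))" by (rule norm_sum)
  also have "\<dots> = real q" using assms by (simp add: norm_power)
  finally show ?thesis .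
qed

lemma geo_bad:
  assumes q: "q \<ge> 2" and d: "d \<ge> 2" and nd: "\<not> int d dvd j"
  shows "norm (\<Sum>a<q. EE d j ^ a) \<le> real q - 2 + BB d"
proof -
  have split: "{..<q} = {..<2} \<union> {2..<q}" using q by auto
  have "(\<Sum>a<q. EE d j ^ a) = (\<Sum>a<2. EE d j ^ a) + (\<Sum>a\<in>{2..<q}. EE d j ^ a)"
    by (subst split, rule sum.union_disjoint) auto
  also have "(\<Sum>a<2. EE d j ^ a) = 1 + EE d j" by (simp add: numeral_2_eq_2)
  finally have eq: "(\<Sum>a<q. EE d j ^ a) = 1 + EE d j + (\<Sum>a\<in>{2..<q}. EE d j ^ a)" .
  have "norm (\<Sum>a\<in>{2..<q}. EE d j ^ a) \<le> (\<Sum>a\<in>{2..<q}. norm (EE d j ^ a))" by (rule norm_sum)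
  also have "\<dots> = real q - 2" using q by (simp add: norm_power)
  finally have n2: "norm (\<Sum>a\<in>{2..<q}. EE d j ^ a) \<le> real q - 2" .
  have "norm (\<Sum>a<q. EE d j ^ a) \<le> norm (1 + EE d j) + norm (\<Sum>a\<in>{2..<q}. EE d j ^ a)"
    unfolding eq by (rule norm_triangle_ineq)
  then show ?thesis using n2 BB_bound[OF d nd] by linarith
qed



context
  fixes q d :: nat and \<psi> \<theta> :: int
  assumes q: "q \<ge> 2" and d: "d \<ge> 2"
begin

definition Sig :: "int \<Rightarrow> nat \<Rightarrow> complex" where
  "Sig t m = (\<Sum>r<q^m. EE d (t * hh q \<psi> \<theta> r))"

definition SS :: "int \<Rightarrow> nat \<Rightarrow> complex" where
  "SS t N = (\<Sum>n<N. EE d (t * hh q \<psi> \<theta> n))"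

lemma block_sum:
  "(\<Sum>r<q^m. EE d (t * hh q \<psi> \<theta> (q^m * a + r))) = EE d (t * hh q \<psi> \<theta> (q^m * a)) * Sig t m"
proof -
  have "(\<Sum>r<q^m. EE d (t * hh q \<psi> \<theta> (q^m * a + r)))
      = (\<Sum>r<q^m. EE d (t * hh q \<psi> \<theta> (q^m * a)) * EE d (t * hh q \<psi> \<theta> r))"
    by (rule sum.cong) (auto simp: hh_block[OF q] distrib_left EE_add)
  thus ?thesis by (simp add: Sig_def sum_distrib_left)
qed

lemma Sig_Suc:
  "Sig t (Suc m) = (\<Sum>a<q. EE d (t * hh q \<psi> \<theta> (q^m)) ^ a) * Sig t m"
proof -
  have "Sig t (Suc m) = (\<Sum>n<q^m * q. EE d (t * hh q \<psi> \<theta> n))"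
    by (simp add: Sig_def mult.commute)
  also have "\<dots> = (\<Sum>a<q. EE d (t * hh q \<psi> \<theta> (q^m * a)) * Sig t m)"
    by (simp add: sum_blocks block_sum)
  also have "\<dots> = (\<Sum>a<q. EE d (t * hh q \<psi> \<theta> (q^m)) ^ a * Sig t m)"
  proof (rule sum.cong)
    fix a assume "a \<in> {..<q}"
    then have "hh q \<psi> \<theta> (q^m * a) = int a * hh q \<psi> \<theta> (q^m)" using hh_mult[OF q] by simp
    then have "t * hh q \<psi> \<theta> (q^m * a) = int a * (t * hh q \<psi> \<theta> (q^m))" by (simp add: algebra_simps)
    then have "EE d (t * hh q \<psi> \<theta> (q^m * a)) = EE d (t * hh q \<psi> \<theta> (q^m)) ^ a"
      by (simp only: EE_mult_nat)
    then show "EE d (t * hh q \<psi> \<theta> (q^m * a)) * Sig t m = EE d (t * hh q \<psi> \<theta> (q^m)) ^ a * Sig t m"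
      by simp
  qed simp
  finally show ?thesis by (simp add: sum_distrib_right)
qed

definition beta :: real where "beta = real q - 2 + BB d"

lemma beta_props: "0 \<le> beta" "beta < real q"
  using BB_nonneg[OF d] BB_lt2[OF d] q unfolding beta_def by auto

lemma Sig_bound:
  assumes nd: "\<not> int d dvd t * \<psi>"
  shows "norm (Sig t (2*M)) \<le> (real q * beta) ^ M"
proof (induction M)
  case 0
  have "Sig t 0 = 1" by (simp add: Sig_def hh_def)
  then show ?case by simp
next
  case (Suc M)
  define H0 where "H0 = t * hh q \<psi> \<theta> (q^(2*M))"
  define H1 where "H1 = t * hh q \<psi> \<theta> (q^(Suc (2*M)))"
  have rel: "H1 = int q * H0 + t * \<psi>"
    unfolding H0_def H1_def using hh_rec[OF q, of \<psi> \<theta> "2*M"] by (simp add: algebra_simps)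
  have either: "\<not> int d dvd H0 \<or> \<not> int d dvd H1"
  proof (rule ccontr)
    assume "\<not> (\<not> int d dvd H0 \<or> \<not> int d dvd H1)"
    then have "int d dvd H0" "int d dvd H1" by auto
    then have "int d dvd H1 - int q * H0" by auto
    then show False using rel nd by simp
  qed
  define G0 where "G0 = (\<Sum>a<q. EE d H0 ^ a)"
  define G1 where "G1 = (\<Sum>a<q. EE d H1 ^ a)"
  have "Sig t (2 * Suc M) = Sig t (Suc (Suc (2*M)))" by simp
  also have "\<dots> = G1 * Sig t (Suc (2*M))" unfolding G1_def H1_def by (rule Sig_Suc)
  also have "Sig t (Suc (2*M)) = G0 * Sig t (2*M)" unfolding G0_def H0_def by (rule Sig_Suc)
  finally have "Sig t (2 * Suc M) = G1 * (G0 * Sig t (2*M))" .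
  then have eq: "norm (Sig t (2 * Suc M)) = norm G1 * norm G0 * norm (Sig t (2*M))"
    by (simp add: norm_mult)
  have g0: "norm G0 \<le> real q" and g1: "norm G1 \<le> real q"
    unfolding G0_def G1_def by (auto intro: geo_le)
  have prod: "norm G1 * norm G0 \<le> real q * beta"
  proof (cases "int d dvd H0")
    case True
    then have "norm G1 \<le> beta" using either geo_bad[OF q d] unfolding G1_def beta_def by auto
    then show ?thesis using g0 by (simp add: mult_mono mult.commute)
  next
    case False
    then have "norm G0 \<le> beta" using geo_bad[OF q d] unfolding G0_def beta_def by auto
    then show ?thesis using g1 by (simp add: mult_mono)
  qed
  have "norm (Sig t (2 * Suc M)) \<le> (real q * beta) * (real q * beta) ^ M"
    unfolding eq by (rule mult_mono[OF prod Suc.IH]) (use beta_props q in auto)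
  then show ?case by simp
qed

lemma SS_bad:
  assumes nd: "\<not> int d dvd t * \<psi>"
  shows "(\<lambda>N. SS t N / of_nat N) \<longlonglongrightarrow> 0"
proof (rule LIMSEQ_I)
  fix r :: real assume r: "0 < r"
  define \<rho> where "\<rho> = beta / real q"
  have \<rho>: "0 \<le> \<rho>" "\<rho> < 1" using beta_props q unfolding \<rho>_def by auto
  obtain M where M: "\<rho> ^ M < r / 2" using real_arch_pow_inv[of "r/2" \<rho>] r \<rho> by auto
  define L where "L = q^(2*M)"
  have Lpos: "L > 0" using q by (simp add: L_def)
  have SigL: "norm (Sig t (2*M)) \<le> real L * r / 2"
  proof -
    have "(real q * beta) ^ M = real L * \<rho> ^ M"
      using q unfolding L_def \<rho>_def by (simp add: power_mult_distrib power_mult power2_eq_square power_divide)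
    also have "\<dots> \<le> real L * r / 2" using M Lpos by simp
    finally show ?thesis using Sig_bound[OF nd, of M] by simp
  qed
  define no where "no = nat \<lceil>2 * real L / r\<rceil> + 1"
  show "\<exists>no. \<forall>N\<ge>no. norm (SS t N / of_nat N - 0) < r"
  proof (intro exI allI impI)
    fix N assume N: "N \<ge> no"
    have Npos: "N > 0" using N by (simp add: no_def)
    have NL: "real N > 2 * real L / r" using N unfolding no_def by linarith
    define A where "A = N div L"
    define R where "R = N mod L"
    have NAR: "N = L * A + R" by (simp add: A_def R_def)
    have RL: "R < L" using Lpos by (simp add: R_def)
    have "{..<N} = {..<L*A} \<union> {L*A..<N}" using NAR by auto
    then have "SS t N = (\<Sum>n<L*A. EE d (t * hh q \<psi> \<theta> n)) + (\<Sum>n\<in>{L*A..<N}. EE d (t * hh q \<psi> \<theta> n))"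
      unfolding SS_def by (simp add: sum.union_disjoint ivl_disj_int)
    also have "(\<Sum>n<L*A. EE d (t * hh q \<psi> \<theta> n)) = (\<Sum>a<A. EE d (t * hh q \<psi> \<theta> (L * a)) * Sig t (2*M))"
      unfolding sum_blocks L_def by (simp add: block_sum)
    finally have eq: "SS t N = (\<Sum>a<A. EE d (t * hh q \<psi> \<theta> (L * a)) * Sig t (2*M)) + (\<Sum>n\<in>{L*A..<N}. EE d (t * hh q \<psi> \<theta> n))" .
    have n1: "norm (\<Sum>a<A. EE d (t * hh q \<psi> \<theta> (L * a)) * Sig t (2*M)) \<le> real A * (real L * r / 2)"
    proof -
      have "norm (\<Sum>a<A. EE d (t * hh q \<psi> \<theta> (L * a)) * Sig t (2*M)) \<le> (\<Sum>a<A. norm (EE d (t * hh q \<psi> \<theta> (L * a)) * Sig t (2*M)))"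
        by (rule norm_sum)
      also have "\<dots> = real A * norm (Sig t (2*M))" by (simp add: norm_mult)
      also have "\<dots> \<le> real A * (real L * r / 2)" using SigL by (intro mult_left_mono) auto
      finally show ?thesis .
    qed
    have n2: "norm (\<Sum>n\<in>{L*A..<N}. EE d (t * hh q \<psi> \<theta> n)) \<le> real L"
    proof -
      have "norm (\<Sum>n\<in>{L*A..<N}. EE d (t * hh q \<psi> \<theta> n)) \<le> (\<Sum>n\<in>{L*A..<N}. norm (EE d (t * hh q \<psi> \<theta> n)))"
        by (rule norm_sum)
      also have "\<dots> = real (N - L*A)" by simp
      also have "\<dots> \<le> real L" using NAR RL by simp
      finally show ?thesis .
    qed
    have "A * L \<le> N" using NAR by (simp add: mult.commute)
    then have "real A * real L \<le> real N" by (metis of_nat_le_iff of_nat_mult)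
    then have "real A * real L * (r / 2) \<le> real N * (r / 2)" using r
      by (intro mult_right_mono) auto
    then have "real A * (real L * r / 2) \<le> real N * r / 2" by (simp add: algebra_simps)
    then have "norm (SS t N) \<le> real N * r / 2 + real L"
      using n1 n2 arg_cong[OF eq, of norm] norm_triangle_ineq[of "(\<Sum>a<A. EE d (t * hh q \<psi> \<theta> (L * a)) * Sig t (2*M))" "(\<Sum>n\<in>{L*A..<N}. EE d (t * hh q \<psi> \<theta> n))"]
      by linarith
    also have "\<dots> < real N * r" using NL r by (simp add: field_simps)
    finally have "norm (SS t N) < real N * r" .
    then show "norm (SS t N / of_nat N - 0) < r" using Npos
      by (simp add: norm_divide field_simps)
  qed
qed

lemma SS_lin:
  assumes d1: "int d dvd t * \<psi>" and nd: "\<not> int d dvd t * \<theta>"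
  shows "(\<lambda>N. SS t N / of_nat N) \<longlonglongrightarrow> 0"
proof (rule bounded_over_n)
  fix N
  define z where "z = EE d (t * \<theta>)"
  have z1: "z \<noteq> 1" using EE_eq_1[of d "t*\<theta>"] d nd unfolding z_def by simp
  have "SS t N = (\<Sum>n<N. z ^ n)"
    unfolding SS_def z_def
  proof (rule sum.cong)
    fix n
    have "t * hh q \<psi> \<theta> n = (t * \<psi>) * int (wq q n) + int n * (t * \<theta>)" by (simp add: hh_def algebra_simps)
    moreover have "EE d ((t * \<psi>) * int (wq q n)) = 1" using d d1 by (intro EE_dvd) auto
    ultimately show "EE d (t * hh q \<psi> \<theta> n) = EE d (t * \<theta>) ^ n" by (simp add: EE_add EE_mult_nat)
  qed simp
  also have "\<dots> = (z ^ N - 1) / (z - 1)" using z1 by (rule geometric_sum)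
  finally have eq: "SS t N = (z ^ N - 1) / (z - 1)" .
  have "norm (z ^ N - 1) \<le> 2" using norm_triangle_ineq4[of "z^N" 1] by (simp add: z_def norm_power)
  then show "norm (SS t N) \<le> 2 / norm (z - 1)" unfolding eq using z1 by (simp add: norm_divide divide_right_mono)
qed

lemma SS_triv:
  assumes "int d dvd t * \<psi>" "int d dvd t * \<theta>"
  shows "SS t N = of_nat N"
proof -
  have "\<And>n. EE d (t * hh q \<psi> \<theta> n) = 1"
  proof -
    fix n
    have "t * hh q \<psi> \<theta> n = (t * \<psi>) * int (wq q n) + (t * \<theta>) * int n" by (simp add: hh_def algebra_simps)
    then show "EE d (t * hh q \<psi> \<theta> n) = 1" using assms d by (intro EE_dvd) auto
  qed
  thus ?thesis by (simp add: SS_def)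
qed

end


lemma count_identity:
  fixes q d :: nat and \<psi> \<theta> x :: int
  assumes q: "q \<ge> 2" and d: "d \<ge> 2"
  shows "(of_nat (card {n. int d dvd hh q \<psi> \<theta> n + x \<and> n < N}) :: complex)
     = (1 / of_nat d) * (\<Sum>t<d. EE d (int t * x) * SS q d \<psi> \<theta> (int t) N)"
proof -
  have d0: "d > 0" using d by simp
  have "{n. int d dvd hh q \<psi> \<theta> n + x \<and> n < N} = {n\<in>{..<N}. int d dvd hh q \<psi> \<theta> n + x}" by auto
  then have "(of_nat (card {n. int d dvd hh q \<psi> \<theta> n + x \<and> n < N}) :: complex)
      = (\<Sum>n<N. if int d dvd hh q \<psi> \<theta> n + x then 1 else 0)"
    by (simp add: sum.inter_filter[symmetric])
  also have "\<dots> = (\<Sum>n<N. (1 / of_nat d) * (\<Sum>t<d. EE d (int t * (hh q \<psi> \<theta> n + x))))"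
    by (rule sum.cong) (use d0 in \<open>auto simp: orth[OF d0]\<close>)
  also have "\<dots> = (1 / of_nat d) * (\<Sum>t<d. \<Sum>n<N. EE d (int t * x) * EE d (int t * hh q \<psi> \<theta> n))"
    by (simp add: sum_distrib_left sum.swap[of _ "{..<N}"] distrib_left EE_add mult.commute)
  also have "\<dots> = (1 / of_nat d) * (\<Sum>t<d. EE d (int t * x) * SS q d \<psi> \<theta> (int t) N)"
    by (simp add: SS_def[OF q d] sum_distrib_left)
  finally show ?thesis .
qed



lemma card_triv:
  fixes d :: nat and g :: int
  assumes d: "d > 0" and g: "g > 0" "g dvd int d"
  shows "card {t\<in>{..<d}. int d dvd int t * g} = nat g"
proof -
  define gn where "gn = nat g"
  have ggn: "g = int gn" and gn0: "gn > 0" using g by (auto simp: gn_def)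
  obtain k where dk: "d = k * gn" using g(2) ggn by (metis dvd_def mult.commute of_nat_dvd_iff)
  have k0: "k > 0" using d dk by simp
  have "{t\<in>{..<d}. int d dvd int t * g} = {t\<in>{..<d}. k dvd t}"
  proof -
    have "\<And>t. int d dvd int t * g \<longleftrightarrow> k dvd t"
    proof -
      fix t
      have "int d dvd int t * g \<longleftrightarrow> k * gn dvd t * gn" unfolding ggn dk
        by (metis of_nat_dvd_iff of_nat_mult)
      also have "\<dots> \<longleftrightarrow> k dvd t" using gn0 by simp
      finally show "int d dvd int t * g \<longleftrightarrow> k dvd t" .
    qed
    thus ?thesis by simp
  qed
  also have "\<dots> = (\<lambda>s. s * k) ` {..<gn}"
  proof (rule set_eqI, rule iffI)
    fix t assume "t \<in> {t\<in>{..<d}. k dvd t}"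
    then obtain s where s: "t = s * k" "t < d" by (auto simp: dvd_def mult.commute)
    then have "s < gn" using dk k0 by (simp add: mult.commute)
    with s show "t \<in> (\<lambda>s. s * k) ` {..<gn}" by auto
  next
    fix t assume "t \<in> (\<lambda>s. s * k) ` {..<gn}"
    then obtain s where s: "t = s * k" "s < gn" by auto
    then have "t < d" using dk k0 by (simp add: mult.commute)
    with s show "t \<in> {t\<in>{..<d}. k dvd t}" by auto
  qed
  also have "card \<dots> = gn" using k0 by (subst card_image) (auto simp: inj_on_def)
  finally show ?thesis by (simp add: gn_def)
qed

theorem theorem3p2:
  fixes q d :: nat and \<psi> \<theta> x :: int
  assumes "q \<ge> 2" and "d \<ge> 2" and "\<psi> \<noteq> 0"
  shows "has_natural_density
           {n. [\<psi> * int (wq q n) + \<theta> * int n + x = 0] (mod int d)}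
           (if gcd \<psi> (gcd \<theta> (int d)) dvd gcd x (int d)
            then real_of_int (gcd \<psi> (gcd \<theta> (int d))) / real d
            else 0)"
proof -
  note q = assms(1) and d = assms(2)
  have d0: "d > 0" using d by simp
  define g where "g = gcd \<psi> (gcd \<theta> (int d))"
  have gpos: "g > 0" using d0 by (simp add: g_def)
  have gd: "g dvd int d" "g dvd \<psi>" "g dvd \<theta>" unfolding g_def by (meson gcd_dvd1 gcd_dvd2 dvd_trans)+
  define T where "T = {n. [\<psi> * int (wq q n) + \<theta> * int n + x = 0] (mod int d)}"
  have T: "\<And>n. n \<in> T \<longleftrightarrow> int d dvd hh q \<psi> \<theta> n + x"
    by (simp add: T_def hh_def cong_0_iff)
  show ?thesis
  proof (cases "g dvd gcd x (int d)")
    case False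
    then have ngx: "\<not> g dvd x" using gd by auto
    have "T = {}"
    proof (rule ccontr)
      assume "T \<noteq> {}"
      then obtain n where "int d dvd hh q \<psi> \<theta> n + x" using T by auto
      then have "g dvd hh q \<psi> \<theta> n + x" using gd dvd_trans by blast
      moreover have "g dvd hh q \<psi> \<theta> n" using gd by (simp add: hh_def)
      ultimately show False using ngx by (simp add: dvd_add_right_iff)
    qed
    then have "has_natural_density T 0" by (simp add: has_natural_density_def)
    then show ?thesis unfolding T_def[symmetric] g_def[symmetric]
      by (simp only: if_not_P[OF False])
  next
    case True
    then have gx: "g dvd x" by (meson dvd_trans gcd_dvd1)
    define triv where "triv t \<longleftrightarrow> int d dvd int t * \<psi> \<and> int d dvd int t * \<theta>" for t :: nat
    have triv_iff: "triv t \<longleftrightarrow> int d dvd int t * g" for t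
    proof
      assume "triv t"
      then have "int d dvd gcd (int t * \<psi>) (gcd (int t * \<theta>) (int t * int d))"
        unfolding triv_def by auto
      also have "gcd (int t * \<psi>) (gcd (int t * \<theta>) (int t * int d)) = int t * g"
        unfolding g_def by (simp add: gcd_mult_left)
      finally show "int d dvd int t * g" .
    next
      assume "int d dvd int t * g"
      then show "triv t" unfolding triv_def using gd
        by (meson dvd_trans mult_dvd_mono dvd_refl)
    qed
    define lim where "lim = (1 / of_nat d) * (\<Sum>t<d. EE d (int t * x) * (if triv t then 1 else 0 :: complex))"
    have lim_val: "lim = complex_of_real (real_of_int g / real d)"
    proof -
      have "(\<Sum>t<d. EE d (int t * x) * (if triv t then 1 else 0 :: complex))
          = (\<Sum>t<d. if triv t then 1 else 0)"
      proof (rule sum.cong)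
        fix t assume "t \<in> {..<d}"
        show "EE d (int t * x) * (if triv t then 1 else 0) = (if triv t then 1 else 0)"
        proof (cases "triv t")
          case True
          then have "int d dvd int t * g" using triv_iff by simp
          moreover have "int t * g dvd int t * x" using gx by simp
          ultimately have "int d dvd int t * x" by (rule dvd_trans)
          then show ?thesis using EE_dvd[OF d0] True by simp
        qed simp
      qed simp
      also have "\<dots> = of_nat (card {t\<in>{..<d}. triv t})"
        by (simp add: sum.inter_filter[symmetric])
      also have "card {t\<in>{..<d}. triv t} = nat g"
        using card_triv[OF d0 gpos gd(1)] triv_iff by simp
      finally show ?thesis using gpos unfolding lim_def by simp
    qed
    have each: "(\<lambda>N. EE d (int t * x) * (SS q d \<psi> \<theta> (int t) N / of_nat N))
        \<longlonglongrightarrow> EE d (int t * x) * (if triv t then 1 else 0)" for t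
    proof (rule tendsto_mult_left)
      show "(\<lambda>N. SS q d \<psi> \<theta> (int t) N / of_nat N) \<longlonglongrightarrow> (if triv t then 1 else 0)"
      proof (cases "triv t")
        case True
        have "\<forall>\<^sub>F N in sequentially. 1 = SS q d \<psi> \<theta> (int t) N / of_nat N"
          using SS_triv[OF q d, of "int t" N] True unfolding triv_def
          by (auto simp: eventually_sequentially SS_triv[OF q d] intro!: exI[of _ 1])
        then show ?thesis using True by (auto intro: Lim_transform_eventually[OF tendsto_const])
      next
        case False
        show ?thesis
        proof (cases "int d dvd int t * \<psi>")
          case True
          then have "\<not> int d dvd int t * \<theta>" using False triv_def by auto
          then show ?thesis using SS_lin[OF q d True] False by simp
        next
          case False2: False
          then show ?thesis using SS_bad[OF q d False2] False by simp
        qed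
      qed
    qed
    have lim_c: "(\<lambda>N. (1 / of_nat d) * (\<Sum>t<d. EE d (int t * x) * (SS q d \<psi> \<theta> (int t) N / of_nat N))) \<longlonglongrightarrow> lim"
      unfolding lim_def by (intro tendsto_mult_left tendsto_sum each)
    have eqs: "\<forall>\<^sub>F N in sequentially.
        (1 / of_nat d) * (\<Sum>t<d. EE d (int t * x) * (SS q d \<psi> \<theta> (int t) N / of_nat N))
        = complex_of_real (real (card {n \<in> T. n < N}) / real N)"
    proof -
      have "(1 / of_nat d) * (\<Sum>t<d. EE d (int t * x) * (SS q d \<psi> \<theta> (int t) N / of_nat N))
        = complex_of_real (real (card {n \<in> T. n < N}) / real N)" for N
      proof -
        have "{n \<in> T. n < N} = {n. int d dvd hh q \<psi> \<theta> n + x \<and> n < N}" using T by auto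
        then have "complex_of_real (real (card {n \<in> T. n < N}) / real N)
            = of_nat (card {n. int d dvd hh q \<psi> \<theta> n + x \<and> n < N}) / of_nat N" by simp
        also have "\<dots> = (1 / of_nat d) * (\<Sum>t<d. EE d (int t * x) * SS q d \<psi> \<theta> (int t) N) / of_nat N"
          by (simp add: count_identity[OF q d])
        also have "\<dots> = (1 / of_nat d) * (\<Sum>t<d. EE d (int t * x) * (SS q d \<psi> \<theta> (int t) N / of_nat N))"
          by (simp add: sum_divide_distrib mult.commute)
        finally show ?thesis by simp
      qed
      thus ?thesis by simp
    qed
    have "(\<lambda>N. complex_of_real (real (card {n \<in> T. n < N}) / real N)) \<longlonglongrightarrow> complex_of_real (real_of_int g / real d)"
      using Lim_transform_eventually[OF lim_c eqs] lim_val by simp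
    then have "(\<lambda>N. real (card {n \<in> T. n < N}) / real N) \<longlonglongrightarrow> real_of_int g / real d"
      by (simp only: tendsto_of_real_iff)
    then show ?thesis using True unfolding T_def[symmetric] g_def[symmetric]
      by (simp add: has_natural_density_def)
  qed
qed

end
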